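(* Let $\Delta(v)=\alpha v+\beta$ with $\alpha,\beta\in\mathbb{R}$ such that $\Delta(v)>0$ for all $v\in[0,1]$, and let $u:[0,1]\to[0,1]$ be the power-law schedule with exponent $p=3/2$: $u(0)=0$, $u(1)=1$, $u'(s)=c\,\Delta^{3/2}(u(s))$ with $c=\int_0^1\Delta^{-3/2}(v)\,dv$. Then $\mathrm{sgn}(u'')$ is constant on $[0,1]$ and $u$ satisfies the Euler–Lagrange equation of $\mathcal{L}_1(s,u,p,q)=|q|/\Delta^2(u)$, namely for all $s\in[0,1]$ $$-\frac{2|u''(s)|\,\Delta'(u(s))}{\Delta^3(u(s))}+\frac{d^2}{ds^2}\left(\frac{\mathrm{sgn}(u''(s))}{\Delta^2(u(s))}\right)=0 .$$
   Context: $\mathrm{sgn}$ denotes the sign function with $\mathrm{sgn}(0)=0$; $\Delta'=d\Delta/dv$. The equation displayed is $\frac{\partial\mathcal{L}_1}{\partial u}-\frac{d}{ds}\frac{\partial \mathcal{L}_1}{\partial p}+\frac{d^2}{ds^2}\frac{\partial\mathcal{L}_1}{\partial q}=0$ evaluated along $(s,u(s),u'(s),u''(s))$, with $\partial|q|/\partial q=\mathrm{sgn}(q)$. *)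

theory Defs
  imports "HOL-Analysis.Analysis"
begin

definition Delta :: "real \<Rightarrow> real \<Rightarrow> real \<Rightarrow> real" where
  "Delta \<alpha> \<beta> v = \<alpha> * v + \<beta>"

end

theory Submission
  imports Defs
begin

theorem theorem6:
  fixes \<alpha> \<beta> c :: real and u :: "real \<Rightarrow> real"
  assumes pos: "\<forall>v\<in>{0..1}. Delta \<alpha> \<beta> v > 0"
    and c_def: "c = integral {0..1} (\<lambda>v. Delta \<alpha> \<beta> v powr (-3/2))"
    and range: "u ` {0..1} \<subseteq> {0..1}"
    and u0: "u 0 = 0" and u1: "u 1 = 1"
    and ode: "\<forall>s\<in>{0..1}. (u has_real_derivative c * Delta \<alpha> \<beta> (u s) powr (3/2)) (at s within {0..1})"
  shows "\<exists>u' u'' w' w''.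
           (\<forall>s\<in>{0..1}.
              (u has_real_derivative u' s) (at s within {0..1}) \<and>
              (u' has_real_derivative u'' s) (at s within {0..1}) \<and>
              ((\<lambda>t. sgn (u'' t) / (Delta \<alpha> \<beta> (u t))^2) has_real_derivative w' s) (at s within {0..1}) \<and>
              (w' has_real_derivative w'' s) (at s within {0..1}) \<and>
              - 2 * \<bar>u'' s\<bar> * \<alpha> / (Delta \<alpha> \<beta> (u s))^3 + w'' s = 0) \<and>
           (\<exists>\<sigma>. \<forall>s\<in>{0..1}. sgn (u'' s) = \<sigma>)"
proof -
  define S :: "real set" where "S = {0..1}"
  define D where "D s = \<alpha> * u s + \<beta>" for s
  have DD: "Delta \<alpha> \<beta> (u s) = D s" for s by (simp add: Delta_def D_def)
  have Dpos: "D s > 0" if "s \<in> S" for s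
  proof -
    have "u s \<in> {0..1}" using range that unfolding S_def by (meson image_subset_iff)
    then show ?thesis using pos unfolding DD[symmetric] by blast
  qed
  define u' where "u' s = c * D s powr (3/2)" for s
  define u'' where "u'' s = 3/2 * c^2 * \<alpha> * (D s)^2" for s
  define \<sigma> where "\<sigma> = sgn (c^2 * \<alpha>)"
  define w' where "w' s = -2 * \<sigma> * \<alpha> * c * D s powr (-3/2)" for s
  define w'' where "w'' s = 3 * \<sigma> * \<alpha>^2 * c^2 / D s" for s
  have du: "(u has_real_derivative u' s) (at s within S)" if "s \<in> S" for s
    using ode that unfolding S_def u'_def DD by auto
  have dD: "(D has_real_derivative \<alpha> * u' s) (at s within S)" if "s \<in> S" for s
    unfolding D_def[abs_def] using du[OF that]
    by (auto intro!: derivative_eq_intros)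
  have sg: "sgn (u'' s) = \<sigma>" if "s \<in> S" for s
  proof -
    have "(D s)^2 > 0" using Dpos[OF that] by simp
    then have "sgn (3/2 * (D s)^2) = 1" by simp
    moreover have "u'' s = (c^2 * \<alpha>) * (3/2 * (D s)^2)" unfolding u''_def by simp
    ultimately show ?thesis unfolding \<sigma>_def by (simp only: sgn_mult)
  qed
  have powr_lem: "D s powr a * D s powr b = D s powr (a + b)" for s a b
    by (simp add: powr_add)
  have main: "(u' has_real_derivative u'' s) (at s within S) \<and>
      ((\<lambda>t. sgn (u'' t) / (D t)^2) has_real_derivative w' s) (at s within S) \<and>
      (w' has_real_derivative w'' s) (at s within S) \<and>
      - 2 * \<bar>u'' s\<bar> * \<alpha> / (D s)^3 + w'' s = 0" if s: "s \<in> S" for s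
  proof (intro conjI)
    have d: "D s > 0" using Dpos[OF s] .
    have h1: "((\<lambda>t. D t powr r) has_real_derivative r * D s powr (r - 1) * (\<alpha> * u' s)) (at s within S)" for r
      using DERIV_chain2[OF has_real_derivative_powr[OF d] dD[OF s]] by simp
    have e1: "c * (3/2 * D s powr (3/2 - 1) * (\<alpha> * u' s)) = u'' s"
    proof -
      have "c * (3/2 * D s powr (3/2 - 1) * (\<alpha> * u' s)) = 3/2 * c^2 * \<alpha> * (D s powr (1/2) * D s powr (3/2))"
        unfolding u'_def by (simp add: power2_eq_square algebra_simps)
      also have "D s powr (1/2) * D s powr (3/2) = (D s)^2"
        using d by (simp add: powr_lem)
      finally show ?thesis unfolding u''_def .
    qed
    show "(u' has_real_derivative u'' s) (at s within S)"
      unfolding u'_def[abs_def] using DERIV_cmult[OF h1[of "3/2"], of c] e1 by simp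
    have e2: "\<sigma> * (-2 * D s powr (-2 - 1) * (\<alpha> * u' s)) = w' s"
    proof -
      have "\<sigma> * (-2 * D s powr (-2 - 1) * (\<alpha> * u' s)) = -2 * \<sigma> * \<alpha> * c * (D s powr (-3) * D s powr (3/2))"
        unfolding u'_def by (simp add: algebra_simps)
      also have "D s powr (-3) * D s powr (3/2) = D s powr (-3/2)"
        by (simp add: powr_lem)
      finally show ?thesis unfolding w'_def .
    qed
    have "((\<lambda>t. \<sigma> * D t powr (-2)) has_real_derivative w' s) (at s within S)"
      using DERIV_cmult[OF h1[of "-2"], of \<sigma>] e2 by simp
    then show "((\<lambda>t. sgn (u'' t) / (D t)^2) has_real_derivative w' s) (at s within S)"
    proof (rule has_field_derivative_transform_within[OF _ zero_less_one s])
      fix x assume x: "x \<in> S"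
      have "D x powr (-2) = inverse ((D x)^2)"
        using Dpos[OF x] by (simp add: powr_minus powr_realpow)
      then show "\<sigma> * D x powr (-2) = sgn (u'' x) / (D x)^2"
        using sg[OF x] by (simp add: divide_inverse)
    qed
    have e3: "-2 * \<sigma> * \<alpha> * c * (-3/2 * D s powr (-3/2 - 1) * (\<alpha> * u' s)) = w'' s"
    proof -
      have "-2 * \<sigma> * \<alpha> * c * (-3/2 * D s powr (-3/2 - 1) * (\<alpha> * u' s)) = 3 * \<sigma> * \<alpha>^2 * c^2 * (D s powr (-5/2) * D s powr (3/2))"
      proof -
        have eq5: "(-3/2 - 1 :: real) = -5/2" by simp
        have ring: "-2 * \<sigma> * \<alpha> * c * (-3/2 * P * (\<alpha> * (c * Q))) = 3 * \<sigma> * \<alpha>^2 * c^2 * (P * Q)" for P Q :: real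
          by (simp only: power2_eq_square) argo
        show ?thesis unfolding u'_def eq5 by (rule ring)
      qed
      also have "D s powr (-5/2) * D s powr (3/2) = inverse (D s)"
      proof -
        have eq: "(-5/2 + 3/2 :: real) = -1" by simp
        have "D s powr (-5/2) * D s powr (3/2) = D s powr (-1)"
          using powr_lem[of s "-5/2" "3/2"] unfolding eq .
        moreover have "D s powr (-1) = inverse (D s)" using powr_neg_one[OF d] by (simp add: divide_inverse)
        ultimately show ?thesis by (rule trans)
      qed
      also have "3 * \<sigma> * \<alpha>^2 * c^2 * inverse (D s) = w'' s"
        unfolding w''_def by (rule divide_inverse[symmetric])
      finally show ?thesis .
    qed
    show "(w' has_real_derivative w'' s) (at s within S)"
      unfolding w'_def[abs_def] using DERIV_cmult[OF h1[of "-3/2"], of "-2 * \<sigma> * \<alpha> * c"] e3 by simp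
    define K where "K = \<bar>\<alpha>\<bar> * \<alpha> * c^2"
    have key: "\<sigma> * \<alpha>^2 * c^2 = K"
    proof (cases "c = 0")
      case True then show ?thesis unfolding K_def by simp
    next
      case False
      then have "c^2 > 0" by simp
      then have "sgn (c^2) = 1" by (simp only: sgn_pos)
      then have "\<sigma> = sgn \<alpha>" unfolding \<sigma>_def sgn_mult by simp
      then show ?thesis unfolding K_def
        by (cases "\<alpha> > 0"; cases "\<alpha> = 0") (auto simp: power2_eq_square)
    qed
    have "\<bar>u'' s\<bar> = 3/2 * c^2 * \<bar>\<alpha>\<bar> * (D s)^2"
      unfolding u''_def by (simp add: abs_mult)
    then have "- 2 * \<bar>u'' s\<bar> * \<alpha> = - 3 * K * (D s)^2"
      unfolding K_def by (simp add: algebra_simps)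
    moreover have "(D s)^3 = (D s)^2 * D s" by (simp add: power3_eq_cube power2_eq_square)
    ultimately have "- 2 * \<bar>u'' s\<bar> * \<alpha> / (D s)^3 = - 3 * K / D s"
      using d by simp
    moreover have "w'' s = 3 * K / D s" unfolding w''_def key[symmetric] by simp
    ultimately show "- 2 * \<bar>u'' s\<bar> * \<alpha> / (D s)^3 + w'' s = 0"
      by simp
  qed
  show ?thesis
    apply (rule exI[of _ u'], rule exI[of _ u''], rule exI[of _ w'], rule exI[of _ w''])
    using main du sg unfolding DD S_def by blast
qed

end
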